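(* Let $s,t\in\mathbb N$ and let $\sigma$ be an $s$-core. For $k\in\mathbb N$ let $$N_\sigma(k)=\#\{\lambda\in\mathcal C_{st}\ :\ \mathrm{core}_s\lambda=\sigma,\ \ell(\lambda)\le k\}.$$ Then there is a quasipolynomial $Q_\sigma(k)$ of degree $s(t-1)$ and period $s$ such that $N_\sigma(k)=Q_\sigma(k)$ for all integers $k\ge\ell(\sigma)$. The leading coefficient of $Q_\sigma$ is $\dfrac{1}{((t-1)!)^s}$.
   Context: A partition $\lambda=(a_1,\dots,a_\ell)$ is a weakly decreasing finite sequence of positive integers; $\ell(\lambda)=\ell$ is its length (the empty partition has length $0$). For $t\in\mathbb N$, a $t$-core is a partition whose Young diagram contains no hook of size (hooklength) $t$; $\mathcal C_t$ denotes the set of $t$-cores. $\mathrm{core}_t\lambda$ is the partition obtained from $\lambda$ by successively removing rim hooks (border strips) of size $t$ until none remain (independent of choices). A function $Q:\mathbb N\to\mathbb Q$ is a quasipolynomial of period $p$ if for each $0\le i<p$ the function $n\mapsto Q(i+np)$ ($n\ge 0$) is a polynomial $P_i$; its degree is the maximum degree of the $P_i$. "The leading coefficient of $Q$ is $c$" means each $P_i$ (for the stated period) has degree equal to that of $Q$ and leading coefficient $c$. *)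

theory Defs
  imports Main "HOL-Computational_Algebra.Polynomial"
begin

text \<open>Partitions as weakly decreasing lists of positive naturals (0-indexed rows/columns).\<close>
definition is_partition :: "nat list \<Rightarrow> bool" where
  "is_partition la \<longleftrightarrow> sorted_wrt (\<ge>) la \<and> (\<forall>x\<in>set la. 0 < x)"

definition young_diagram :: "nat list \<Rightarrow> (nat \<times> nat) set" where
  "young_diagram la = {(i, j). i < length la \<and> j < la ! i}"

definition conj_part :: "nat list \<Rightarrow> nat \<Rightarrow> nat" where
  "conj_part la j = length (filter (\<lambda>x. j < x) la)"

definition hook_length :: "nat list \<Rightarrow> nat \<Rightarrow> nat \<Rightarrow> nat" where
  "hook_length la i j = (la ! i - Suc j) + (conj_part la j - Suc i) + 1"

definition is_core :: "nat \<Rightarrow> nat list \<Rightarrow> bool" where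
  "is_core t la \<longleftrightarrow> is_partition la \<and>
     \<not> (\<exists>(i, j) \<in> young_diagram la. hook_length la i j = t)"

definition cells_adjacent :: "nat \<times> nat \<Rightarrow> nat \<times> nat \<Rightarrow> bool" where
  "cells_adjacent c d \<longleftrightarrow>
     (fst c = fst d \<and> (snd d = Suc (snd c) \<or> snd c = Suc (snd d))) \<or>
     (snd c = snd d \<and> (fst d = Suc (fst c) \<or> fst c = Suc (fst d)))"

definition cells_connected :: "(nat \<times> nat) set \<Rightarrow> bool" where
  "cells_connected S \<longleftrightarrow>
     (\<forall>c\<in>S. \<forall>d\<in>S. (\<lambda>x y. x \<in> S \<and> y \<in> S \<and> cells_adjacent x y)\<^sup>*\<^sup>* c d)"

definition no_2x2_square :: "(nat \<times> nat) set \<Rightarrow> bool" where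
  "no_2x2_square S \<longleftrightarrow>
     \<not> (\<exists>i j. (i, j) \<in> S \<and> (Suc i, j) \<in> S \<and> (i, Suc j) \<in> S \<and> (Suc i, Suc j) \<in> S)"

definition removes_rim_hook :: "nat \<Rightarrow> nat list \<Rightarrow> nat list \<Rightarrow> bool" where
  "removes_rim_hook t la mu \<longleftrightarrow>
     is_partition la \<and> is_partition mu \<and>
     young_diagram mu \<subseteq> young_diagram la \<and>
     card (young_diagram la - young_diagram mu) = t \<and>
     young_diagram la - young_diagram mu \<noteq> {} \<and>
     cells_connected (young_diagram la - young_diagram mu) \<and>
     no_2x2_square (young_diagram la - young_diagram mu)"

definition core :: "nat \<Rightarrow> nat list \<Rightarrow> nat list" where
  "core t la = (THE mu. (removes_rim_hook t)\<^sup>*\<^sup>* la mu \<and> \<not> (\<exists>nu. removes_rim_hook t mu nu))"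

end

theory Submission
  imports Defs "HOL-Library.FuncSet"
begin

definition pp :: "nat list \<Rightarrow> nat \<Rightarrow> nat" where
  "pp la i = (if i < length la then la ! i else 0)"

definition bt :: "nat \<Rightarrow> nat list \<Rightarrow> nat \<Rightarrow> nat" where
  "bt k la i = pp la i + (k - Suc i)"

definition beta :: "nat \<Rightarrow> nat list \<Rightarrow> nat set" where
  "beta k la = bt k la ` {..<k}"

lemma pp_antimono:
  assumes "is_partition la" "i \<le> j"
  shows "pp la j \<le> pp la i"
proof -
  have s: "sorted_wrt (\<ge>) la" using assms(1) unfolding is_partition_def by simp
  show ?thesis
  proof (cases "j < length la")
    case True
    then show ?thesis using s assms(2) unfolding pp_def
      by (cases "i = j") (auto simp: sorted_wrt_iff_nth_less)
  next
    case False
    then show ?thesis unfolding pp_def by simp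
  qed
qed

lemma pp_pos_iff:
  assumes "is_partition la"
  shows "0 < pp la i \<longleftrightarrow> i < length la"
  using assms unfolding is_partition_def pp_def by (auto simp: nth_mem)

lemma young_pp: "young_diagram la = {(i, j). j < pp la i}"
  unfolding young_diagram_def pp_def by (auto split: if_splits)

lemma bt_dec:
  assumes "is_partition la" "i < j" "j < k"
  shows "bt k la j < bt k la i"
  using pp_antimono[OF assms(1), of i j] assms(2,3) unfolding bt_def by simp

lemma bt_inj: "is_partition la \<Longrightarrow> inj_on (bt k la) {..<k}"
  unfolding inj_on_def by (metis bt_dec lessThan_iff linorder_neqE_nat less_irrefl)

lemma card_beta: "is_partition la \<Longrightarrow> card (beta k la) = k"
  unfolding beta_def using bt_inj card_image by fastforce

lemma finite_beta: "finite (beta k la)"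
  unfolding beta_def by simp

lemma partition_eqI:
  assumes "is_partition la" "is_partition mu" "\<And>i. pp la i = pp mu i"
  shows "la = mu"
proof -
  have "length la = length mu"
  proof (rule ccontr)
    assume "length la \<noteq> length mu"
    then consider "length la < length mu" | "length mu < length la" by linarith
    then show False
    proof cases
      case 1
      then show False using assms(3)[of "length la"] pp_pos_iff[OF assms(1), of "length la"]
          pp_pos_iff[OF assms(2), of "length la"] by simp
    next
      case 2
      then show False using assms(3)[of "length mu"] pp_pos_iff[OF assms(1), of "length mu"]
          pp_pos_iff[OF assms(2), of "length mu"] by simp
    qed
  qed
  then show ?thesis using assms(3) unfolding pp_def
    by (metis nth_equalityI)
qed

lemma dec_card_above:
  fixes f :: "nat \<Rightarrow> 'a::linorder"
  assumes "\<And>i j. i < j \<Longrightarrow> j < k \<Longrightarrow> f j < f i" "i < k"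
  shows "card {y \<in> f ` {..<k}. f i < y} = i"
proof -
  have "{y \<in> f ` {..<k}. f i < y} = f ` {..<i}"
  proof (intro equalityI subsetI)
    fix y assume "y \<in> {y \<in> f ` {..<k}. f i < y}"
    then obtain j where j: "j < k" "y = f j" "f i < f j" by auto
    have "j < i"
    proof (rule ccontr)
      assume "\<not> j < i"
      then have "i = j \<or> i < j" by auto
      then show False using assms(1)[of i j] j by (auto simp: less_asym)
    qed
    then show "y \<in> f ` {..<i}" using j by auto
  next
    fix y assume "y \<in> f ` {..<i}"
    then obtain j where "j < i" "y = f j" by auto
    then show "y \<in> {y \<in> f ` {..<k}. f i < y}" using assms by auto
  qed
  moreover have "inj_on f {..<i}"
    unfolding inj_on_def using assms(1,2)
    by (metis lessThan_iff linorder_neqE_nat order.strict_trans less_irrefl)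
  ultimately show ?thesis by (simp add: card_image)
qed

lemma dec_image_eq:
  fixes f g :: "nat \<Rightarrow> 'a::linorder"
  assumes "\<And>i j. i < j \<Longrightarrow> j < k \<Longrightarrow> f j < f i"
    "\<And>i j. i < j \<Longrightarrow> j < k \<Longrightarrow> g j < g i"
    "f ` {..<k} = g ` {..<k}" "i < k"
  shows "f i = g i"
proof -
  have "f i \<in> g ` {..<k}" using assms(3,4) by auto
  then obtain i' where i': "i' < k" "f i = g i'" by auto
  have "i' = i"
    using dec_card_above[of k f i, OF assms(1) assms(4)] dec_card_above[of k g i', OF assms(2) i'(1)]
      assms(3) i'(2) by simp
  then show ?thesis using i' by simp
qed

lemma beta_inj:
  assumes "is_partition la" "is_partition mu" "length la \<le> k" "length mu \<le> k"
    "beta k la = beta k mu"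
  shows "la = mu"
proof (rule partition_eqI[OF assms(1,2)])
  fix i
  show "pp la i = pp mu i"
  proof (cases "i < k")
    case True
    have "bt k la i = bt k mu i"
      by (rule dec_image_eq[of k]) (use assms bt_dec True in \<open>auto simp: beta_def\<close>)
    then show ?thesis unfolding bt_def by simp
  next
    case False
    then show ?thesis using assms(3,4) unfolding pp_def by simp
  qed
qed

lemma downclosed_eq:
  fixes A :: "nat set"
  assumes "finite A" "\<And>i j. j \<in> A \<Longrightarrow> i \<le> j \<Longrightarrow> i \<in> A"
  shows "A = {..<card A}"
proof (cases "A = {}")
  case True then show ?thesis by simp
next
  case False
  have "A = {..Max A}"
    using assms False by (auto intro: Max_ge Max_in)
  then show ?thesis by (metis card_atMost lessThan_Suc_atMost)
qed

lemma exists_partition: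
  fixes v :: "nat \<Rightarrow> nat"
  assumes "\<And>i j. i \<le> j \<Longrightarrow> v j \<le> v i" "\<And>i. k \<le> i \<Longrightarrow> v i = 0"
  shows "\<exists>la. is_partition la \<and> length la \<le> k \<and> (\<forall>i. pp la i = v i)"
proof -
  define A where "A = {i. 0 < v i}"
  have Ak: "A \<subseteq> {..<k}" using assms(2) unfolding A_def by (auto, metis not_less neq0_conv)
  have fA: "finite A" using Ak finite_subset by blast
  have "A = {..<card A}"
    by (rule downclosed_eq[OF fA]) (use assms(1) in \<open>auto simp: A_def intro: less_le_trans\<close>)
  define m where "m = card A"
  have mk: "m \<le> k" unfolding m_def using Ak by (metis card_lessThan card_mono finite_lessThan)
  have Am: "\<And>i. 0 < v i \<longleftrightarrow> i < m"
    using \<open>A = {..<card A}\<close> unfolding m_def A_def by blast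
  define la where "la = map v [0..<m]"
  have "is_partition la"
    unfolding is_partition_def la_def using Am assms(1)
    by (auto simp: sorted_wrt_iff_nth_less)
  moreover have "\<forall>i. pp la i = v i"
    unfolding la_def pp_def using Am by auto
  ultimately show ?thesis using mk unfolding la_def by auto
qed

lemma beta_surj:
  assumes "finite X" "card X = k"
  shows "\<exists>la. is_partition la \<and> length la \<le> k \<and> beta k la = X"
proof -
  define xs where "xs = sorted_list_of_set X"
  have lxs: "length xs = k" using assms unfolding xs_def by simp
  have sxs: "sorted_wrt (<) xs" unfolding xs_def by simp
  have sx: "set xs = X" unfolding xs_def using assms by simp
  define f where "f i = xs ! (k - Suc i)" for i
  have fdec: "f j < f i" if "i < j" "j < k" for i j
    unfolding f_def using sxs lxs that by (auto simp: sorted_wrt_iff_nth_less)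
  have fge: "k - Suc i \<le> f i" if "i < k" for i
    using that
  proof (induction "k - Suc i" arbitrary: i)
    case 0 then show ?case by simp
  next
    case (Suc n)
    then have "f (Suc i) < f i" using fdec by simp
    moreover have "k - Suc (Suc i) \<le> f (Suc i)" using Suc by simp
    ultimately show ?case using Suc(2) by simp
  qed
  define v where "v i = (if i < k then f i - (k - Suc i) else 0)" for i
  have vmono: "v j \<le> v i" if "i \<le> j" for i j
  proof -
    have "v (Suc i) \<le> v i" for i
    proof (cases "Suc i < k")
      case True
      then show ?thesis unfolding v_def using fdec[of i "Suc i"] fge[of "Suc i"] by simp
    next
      case False then show ?thesis unfolding v_def by simp
    qed
    then show ?thesis using that by (metis antimono_iff_le_Suc antimonoD)
  qed
  obtain la where la: "is_partition la" "length la \<le> k" "\<forall>i. pp la i = v i"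
    using exists_partition[of v k] vmono unfolding v_def by fastforce
  have "bt k la i = f i" if "i < k" for i
    unfolding bt_def using la(3) fge[OF that] that unfolding v_def by simp
  then have "beta k la = f ` {..<k}" unfolding beta_def by simp
  also have "\<dots> = set xs"
  proof -
    have "f ` {..<k} = (\<lambda>i. xs ! i) ` ((\<lambda>i. k - Suc i) ` {..<k})" unfolding f_def by auto
    also have "(\<lambda>i. k - Suc i) ` {..<k} = {..<k}"
    proof (intro equalityI subsetI)
      fix x assume "x \<in> {..<k}"
      then have "x = k - Suc (k - Suc x)" "k - Suc x < k" by auto
      then show "x \<in> (\<lambda>i. k - Suc i) ` {..<k}" by blast
    qed auto
    finally show ?thesis using lxs by (auto simp: set_conv_nth lessThan_def)
  qed
  finally show ?thesis using la sx by auto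
qed

definition closed :: "nat \<Rightarrow> nat set \<Rightarrow> bool" where
  "closed m X \<longleftrightarrow> (\<forall>x\<in>X. m \<le> x \<longrightarrow> x - m \<in> X)"

lemma conj_part_pp:
  assumes "is_partition la"
  shows "r < conj_part la j \<longleftrightarrow> j < pp la r"
proof -
  have "conj_part la j = card {r. j < pp la r}"
    unfolding conj_part_def length_filter_conv_card pp_def
    by (rule arg_cong[where f=card]) auto
  moreover have "{r. j < pp la r} = {..<card {r. j < pp la r}}"
  proof (rule downclosed_eq)
    show "finite {r. j < pp la r}"
      by (rule finite_subset[of _ "{..<length la}"]) (auto simp: pp_def split: if_splits)
  next
    fix a b assume "b \<in> {r. j < pp la r}" "a \<le> b"
    then show "a \<in> {r. j < pp la r}" using pp_antimono[OF assms, of a b] by auto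
  qed
  ultimately show ?thesis by auto
qed

lemma cut:
  assumes la: "is_partition la" "length la \<le> k" and y: "y \<notin> beta k la"
  defines "c \<equiv> card {r. r < k \<and> y < bt k la r}"
  shows "\<And>r. r < c \<longleftrightarrow> r < k \<and> y < bt k la r"
    and "c \<le> k" and "k - c \<le> y" and "pp la c \<le> y - (k - c)"
    and "0 < c \<Longrightarrow> y - (k - c) < pp la (c - 1)"
proof -
  have eq: "{r. r < k \<and> y < bt k la r} = {..<c}"
    unfolding c_def
  proof (rule downclosed_eq)
    fix a b assume "b \<in> {r. r < k \<and> y < bt k la r}" "a \<le> b"
    then show "a \<in> {r. r < k \<and> y < bt k la r}"
      using bt_dec[OF la(1), of a b k] by (cases "a = b") auto
  qed simp
  show r: "r < c \<longleftrightarrow> r < k \<and> y < bt k la r" for r using eq by blast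
  show ck: "c \<le> k" using r[of k] by (metis le_less_linear less_irrefl_nat r)
  have btc: "bt k la c < y" if "c < k"
  proof -
    have "bt k la c \<noteq> y" using y that unfolding beta_def by auto
    moreover have "\<not> y < bt k la c" using r[of c] that by simp
    ultimately show ?thesis by simp
  qed
  show ky: "k - c \<le> y"
  proof (cases "c < k")
    case True then show ?thesis using btc unfolding bt_def by simp
  next
    case False then show ?thesis by simp
  qed
  show "pp la c \<le> y - (k - c)"
  proof (cases "c < k")
    case True then show ?thesis using btc ky unfolding bt_def by simp
  next
    case False then have "pp la c = 0" using la(2) unfolding pp_def by simp
    then show ?thesis by simp
  qed
  show "y - (k - c) < pp la (c - 1)" if "0 < c"
  proof -
    have "y < pp la (c - 1) + (k - Suc (c - 1))" using r[of "c - 1"] that ck unfolding bt_def by simp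
    then have "y < pp la (c - 1) + (k - c)" using that by simp
    then show ?thesis using ky by linarith
  qed
qed

lemma hook_iff:
  assumes la: "is_partition la" "length la \<le> k" and h: "0 < h"
  shows "(\<exists>(i, j)\<in>young_diagram la. hook_length la i j = h) \<longleftrightarrow>
         (\<exists>i<k. h \<le> bt k la i \<and> bt k la i - h \<notin> beta k la)"
proof
  assume "\<exists>(i, j)\<in>young_diagram la. hook_length la i j = h"
  then obtain i j where ij: "j < pp la i" "hook_length la i j = h"
    unfolding young_pp by auto
  define c where "c = conj_part la j"
  have cr: "r < c \<longleftrightarrow> j < pp la r" for r using conj_part_pp[OF la(1)] c_def by simp
  have ic: "i < c" using cr ij by simp
  have ck: "c \<le> k"
  proof (rule ccontr)
    assume "\<not> c \<le> k"
    then have "j < pp la k" using cr[of k] by simp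
    then show False using la(2) unfolding pp_def by simp
  qed
  have ilen: "i < length la" using ij(1) unfolding pp_def by (simp split: if_splits)
  have hk: "hook_length la i j = (pp la i - Suc j) + (c - Suc i) + 1"
    unfolding hook_length_def c_def using ilen pp_def by simp
  define y where "y = j + (k - c)"
  have hy: "bt k la i - h = y" "h \<le> bt k la i"
    using ij hk ic ck unfolding bt_def y_def by auto
  have "y \<notin> beta k la"
  proof
    assume "y \<in> beta k la"
    then obtain r where r: "r < k" "bt k la r = y" unfolding beta_def by auto
    show False
    proof (cases "r < c")
      case True
      then have "j < pp la r" using cr by simp
      then show False using r True ck unfolding bt_def y_def by simp
    next
      case False
      then have "pp la r \<le> j" using cr by simp
      then show False using r False ck unfolding bt_def y_def by simp
    qed
  qed
  then show "\<exists>i<k. h \<le> bt k la i \<and> bt k la i - h \<notin> beta k la"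
    using hy ic ck by (intro exI[of _ i]) auto
next
  assume "\<exists>i<k. h \<le> bt k la i \<and> bt k la i - h \<notin> beta k la"
  then obtain i where i: "i < k" "h \<le> bt k la i" "bt k la i - h \<notin> beta k la" by auto
  define y where "y = bt k la i - h"
  define c where "c = card {r. r < k \<and> y < bt k la r}"
  note C = cut[OF la i(3)[folded y_def], folded c_def]
  have ic: "i < c" using C(1)[of i] i h unfolding y_def by simp
  define j where "j = y - (k - c)"
  have j1: "j < pp la (c - 1)" using C(5) ic unfolding j_def by simp
  have "i \<le> c - 1" using ic by simp
  then have ji: "j < pp la i" using j1 pp_antimono[OF la(1), of i "c - 1"] by simp
  have cc: "conj_part la j = c"
  proof -
    have "r < conj_part la j \<longleftrightarrow> r < c" for r
    proof
      assume "r < conj_part la j"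
      then have "j < pp la r" using conj_part_pp[OF la(1)] by simp
      then show "r < c" using C(4) pp_antimono[OF la(1), of c r] unfolding j_def
        by (metis le_less_linear less_le_trans not_less)
    next
      assume "r < c"
      then have "r \<le> c - 1" by simp
      then show "r < conj_part la j" using conj_part_pp[OF la(1)] j1
          pp_antimono[OF la(1), of r "c - 1"] by simp
    qed
    then show ?thesis by (metis less_irrefl_nat linorder_neqE_nat)
  qed
  have ilen: "i < length la" using ji unfolding pp_def by (simp split: if_splits)
  have "hook_length la i j = (pp la i - Suc j) + (c - Suc i) + 1"
    unfolding hook_length_def cc using ilen pp_def by simp
  also have "\<dots> = h"
    using ji ic C(2,3) i(2) unfolding j_def y_def bt_def by simp
  finally show "\<exists>(i, j)\<in>young_diagram la. hook_length la i j = h"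
    using ji unfolding young_pp by auto
qed

lemma core_iff_closed:
  assumes la: "is_partition la" "length la \<le> k" and h: "0 < h"
  shows "is_core h la \<longleftrightarrow> closed h (beta k la)"
proof -
  have "closed h (beta k la) \<longleftrightarrow> \<not> (\<exists>i<k. h \<le> bt k la i \<and> bt k la i - h \<notin> beta k la)"
    unfolding closed_def beta_def by auto
  then show ?thesis unfolding is_core_def using hook_iff[OF assms] la(1) by blast
qed

lemma sum_beta: "is_partition la \<Longrightarrow> sum id (beta k la) = (\<Sum>r<k. bt k la r)"
  unfolding beta_def by (simp add: sum.reindex bt_inj)

lemma card_skew:
  assumes la: "is_partition la" "length la \<le> k" and mu: "is_partition mu" "length mu \<le> k"
    and le: "\<And>r. pp mu r \<le> pp la r"
  shows "card (young_diagram la - young_diagram mu) + sum id (beta k mu) = sum id (beta k la)"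
proof -
  have "young_diagram la - young_diagram mu = Sigma {..<k} (\<lambda>r. {pp mu r..<pp la r})"
  proof -
    have "pp la r = 0" if "k \<le> r" for r using that la(2) unfolding pp_def by simp
    then show ?thesis unfolding young_pp by (auto simp: not_less) (metis le_less_linear less_nat_zero_code)
  qed
  then have "card (young_diagram la - young_diagram mu) = (\<Sum>r<k. pp la r - pp mu r)"
    by (simp add: card_SigmaI)
  moreover have "(\<Sum>r<k. bt k la r) = (\<Sum>r<k. pp la r - pp mu r) + (\<Sum>r<k. bt k mu r)"
    unfolding sum.distrib[symmetric] using le unfolding bt_def
    by (intro sum.cong) (auto simp: add.commute le_add_diff_inverse)
  ultimately show ?thesis using sum_beta la(1) mu(1) by simp
qed

lemma shift_beta:
  assumes la: "is_partition la" and ab: "a \<le> b" "b < k"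
    and mid: "\<And>r. a \<le> r \<Longrightarrow> r < b \<Longrightarrow> bt k mu r = bt k la (Suc r)"
    and out: "\<And>r. r < k \<Longrightarrow> r < a \<or> b < r \<Longrightarrow> bt k mu r = bt k la r"
  shows "beta k mu = insert (bt k mu b) (beta k la - {bt k la a})"
proof (intro equalityI subsetI)
  have inj: "inj_on (bt k la) {..<k}" using bt_inj[OF la] .
  fix z assume "z \<in> beta k mu"
  then obtain r where r: "r < k" "z = bt k mu r" unfolding beta_def by auto
  consider "r = b" | "a \<le> r" "r < b" | "r < a \<or> b < r" by linarith
  then show "z \<in> insert (bt k mu b) (beta k la - {bt k la a})"
  proof cases
    case 1 then show ?thesis using r by simp
  next
    case 2
    then have "z = bt k la (Suc r)" "Suc r < k" "Suc r \<noteq> a" using mid r ab by auto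
    moreover have "bt k la (Suc r) \<noteq> bt k la a"
      using inj_onD[OF inj, of "Suc r" a] \<open>Suc r < k\<close> \<open>Suc r \<noteq> a\<close> ab by auto
    ultimately show ?thesis unfolding beta_def by auto
  next
    case 3
    then have "z = bt k la r" "r \<noteq> a" using out r ab by auto
    moreover have "bt k la r \<noteq> bt k la a"
      using inj_onD[OF inj, of r a] r \<open>r \<noteq> a\<close> ab by auto
    ultimately show ?thesis unfolding beta_def using r by auto
  qed
next
  fix z assume z: "z \<in> insert (bt k mu b) (beta k la - {bt k la a})"
  show "z \<in> beta k mu"
  proof (cases "z = bt k mu b")
    case True then show ?thesis using ab unfolding beta_def by auto
  next
    case False
    then obtain r where r: "r < k" "z = bt k la r" "r \<noteq> a" using z unfolding beta_def by auto
    consider "r < a \<or> b < r" | "a < r" "r \<le> b" using r(3) by linarith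
    then show ?thesis
    proof cases
      case 1 then show ?thesis using out r unfolding beta_def by (metis image_eqI lessThan_iff)
    next
      case 2
      then have "z = bt k mu (r - 1)" using mid[of "r - 1"] r by simp
      then show ?thesis using 2 ab unfolding beta_def by auto
    qed
  qed
qed

lemma sum_move:
  fixes X Y :: "nat set"
  assumes "finite X" "x \<in> X" "y \<notin> X - {x}" "Y = insert y (X - {x})" "card Y = card X"
  shows "sum id Y + x = sum id X + y"
proof (cases "y = x")
  case True
  then have "Y = X" using assms by auto
  then show ?thesis using True by (simp add: add.commute)
next
  case False
  then have "y \<notin> X" using assms(3) by auto
  have "sum id X = sum id (X - {x}) + x" using assms(1,2) by (simp add: sum.remove add.commute)
  moreover have "sum id Y = sum id (X - {x}) + y" using assms(1,4) \<open>y \<notin> X\<close> by (simp add: add.commute)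
  ultimately show "sum id Y + x = sum id X + y" by linarith
qed

lemma sym_path:
  assumes "\<And>x y. R x y \<Longrightarrow> R y x" "R\<^sup>*\<^sup>* x y"
  shows "R\<^sup>*\<^sup>* y x"
  using assms(2)
proof (induction rule: rtranclp_induct)
  case base then show ?case by simp
next
  case (step y z)
  then show ?case using assms(1) by (meson converse_rtranclp_into_rtranclp)
qed

lemma rim_fwd:
  assumes rh: "removes_rim_hook h la mu" and lak: "length la \<le> k"
  shows "length mu \<le> length la" "0 < h"
    "\<exists>i<k. h \<le> bt k la i \<and> bt k la i - h \<notin> beta k la \<and>
        beta k mu = insert (bt k la i - h) (beta k la - {bt k la i})"
proof -
  define S where "S = young_diagram la - young_diagram mu"
  have la: "is_partition la" and mu: "is_partition mu" and sub: "young_diagram mu \<subseteq> young_diagram la"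
    and cS: "card S = h" and neS: "S \<noteq> {}" and conn: "cells_connected S" and sq: "no_2x2_square S"
    using rh unfolding removes_rim_hook_def S_def by auto
  have le: "pp mu r \<le> pp la r" for r
  proof (rule ccontr)
    assume "\<not> pp mu r \<le> pp la r"
    then have "(r, pp la r) \<in> young_diagram mu" unfolding young_pp by simp
    then show False using sub unfolding young_pp by auto
  qed
  show lmu: "length mu \<le> length la"
  proof (rule ccontr)
    assume "\<not> length mu \<le> length la"
    then have "0 < pp mu (length la)" using pp_pos_iff[OF mu] by simp
    moreover have "pp la (length la) = 0" using pp_pos_iff[OF la, of "length la"] by simp
    ultimately show False using le[of "length la"] by simp
  qed
  have Sd: "S = {(r, j). pp mu r \<le> j \<and> j < pp la r}"
    unfolding S_def young_pp by auto
  have fS: "finite S"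
    unfolding S_def young_diagram_def by (rule finite_subset[of _ "{..<length la} \<times> {..<Max (set la)}"])
      (auto simp: Max_gr_iff less_le_trans)
  then show h0: "0 < h" using cS neS by (metis card_gt_0_iff)
  have A: "pp la (Suc r) \<le> Suc (pp mu r)" for r
  proof (rule ccontr)
    assume "\<not> pp la (Suc r) \<le> Suc (pp mu r)"
    then have c: "pp mu r + 2 \<le> pp la (Suc r)" by simp
    define j where "j = pp la (Suc r) - 2"
    have "pp mu (Suc r) \<le> pp mu r" "pp la (Suc r) \<le> pp la r"
      using pp_antimono la mu by auto
    then have "(r, j) \<in> S \<and> (Suc r, j) \<in> S \<and> (r, Suc j) \<in> S \<and> (Suc r, Suc j) \<in> S"
      unfolding Sd j_def using c by auto
    then show False using sq unfolding no_2x2_square_def by blast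
  qed
  define R where "R = {r. pp mu r < pp la r}"
  have Rk: "R \<subseteq> {..<k}"
  proof
    fix r assume "r \<in> R"
    then have "0 < pp la r" unfolding R_def by simp
    then show "r \<in> {..<k}" using pp_pos_iff[OF la] lak by simp
  qed
  have fR: "finite R" using Rk finite_subset by blast
  have neR: "R \<noteq> {}"
  proof -
    obtain r j where "(r, j) \<in> S" using neS by auto
    then have "r \<in> R" unfolding Sd R_def by auto
    then show ?thesis by auto
  qed
  define a where "a = Min R"
  define b where "b = Max R"
  have aR: "a \<in> R" and bR: "b \<in> R" unfolding a_def b_def using fR neR by auto
  have ab: "a \<le> b" unfolding a_def b_def using fR neR by simp
  have bk: "b < k" using bR Rk by auto
  have notR: "pp mu r = pp la r" if "r < a \<or> b < r" for r
  proof -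
    have "r \<notin> R"
    proof
      assume "r \<in> R"
      then have "a \<le> r" "r \<le> b" using fR unfolding a_def b_def by auto
      then show False using that by linarith
    qed
    then show ?thesis using le[of r] unfolding R_def by simp
  qed
  have B: "pp mu r < pp la (Suc r)" if "a \<le> r" "r < b" for r
  proof (rule ccontr)
    assume nB: "\<not> pp mu r < pp la (Suc r)"
    let ?Rel = "\<lambda>x y. x \<in> S \<and> y \<in> S \<and> cells_adjacent x y"
    have s1: "(a, pp mu a) \<in> S" "(b, pp mu b) \<in> S" using aR bR unfolding Sd R_def by auto
    have path: "?Rel\<^sup>*\<^sup>* (a, pp mu a) (b, pp mu b)"
      using conn[unfolded cells_connected_def, rule_format, OF s1] .
    have fz: "fst z \<le> r" if "?Rel\<^sup>*\<^sup>* (a, pp mu a) z" for z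
      using that
    proof (induction rule: rtranclp_induct)
      case base then show ?case using \<open>a \<le> r\<close> by simp
    next
      case (step y z)
      obtain r1 j1 r2 j2 where yz: "y = (r1, j1)" "z = (r2, j2)" by (cases y, cases z) auto
      show ?case
      proof (rule ccontr)
        assume "\<not> fst z \<le> r"
        then have "r2 = Suc r" "r1 = r" "j1 = j2"
          using step(2,3) yz unfolding cells_adjacent_def by auto
        then show False using step(2) yz nB unfolding Sd by auto
      qed
    qed
    have "fst (b, pp mu b) \<le> r" by (rule fz[OF path])
    then show False using \<open>r < b\<close> by simp
  qed
  have midv: "Suc (pp mu r) = pp la (Suc r)" if "a \<le> r" "r < b" for r
    using A[of r] B[OF that] by simp
  define x where "x = bt k la a"
  define y where "y = bt k mu b"
  have bmu: "beta k mu = insert y (beta k la - {x})"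
    unfolding x_def y_def
  proof (rule shift_beta[OF la ab bk])
    fix r assume "a \<le> r" "r < b"
    then show "bt k mu r = bt k la (Suc r)"
      using midv[of r] bk unfolding bt_def by simp
  next
    fix r assume "r < k" "r < a \<or> b < r"
    then show "bt k mu r = bt k la r" using notR unfolding bt_def by simp
  qed
  have xin: "x \<in> beta k la" unfolding x_def beta_def using ab bk by auto
  have ynot: "y \<notin> beta k la - {x}"
  proof
    assume "y \<in> beta k la - {x}"
    then have "beta k mu = beta k la - {x}" using bmu by auto
    then have "card (beta k mu) = k - 1" using xin card_beta[OF la] finite_beta by simp
    then show False using card_beta[OF mu] bk by simp
  qed
  note sm = sum_move[OF finite_beta xin ynot bmu] 
  have "card S + sum id (beta k mu) = sum id (beta k la)"
    unfolding S_def using card_skew[OF la lak mu _ le] lmu lak by simp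
  then have hxy: "h + y = x" using sm card_beta[OF la] card_beta[OF mu] cS by simp
  have hx: "h \<le> x" "x - h = y" using hxy by auto
  have "y \<noteq> x" using hxy h0 by simp
  then have yn: "y \<notin> beta k la" using ynot by simp
  have "a < k" using ab bk by simp
  then show "\<exists>i<k. h \<le> bt k la i \<and> bt k la i - h \<notin> beta k la \<and>
        beta k mu = insert (bt k la i - h) (beta k la - {bt k la i})"
    using hx yn bmu unfolding x_def by blast
qed

lemma rim_bwd:
  assumes la: "is_partition la" "length la \<le> k" and ak: "a < k" and h0: "0 < h"
    and hx: "h \<le> bt k la a" and yn0: "bt k la a - h \<notin> beta k la"
  shows "\<exists>mu. removes_rim_hook h la mu"
proof -
  define x where "x = bt k la a"
  define y where "y = x - h"
  have yn: "y \<notin> beta k la" using yn0 unfolding y_def x_def .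
  define c where "c = card {r. r < k \<and> y < bt k la r}"
  note C = cut[OF la yn, folded c_def]
  have ac: "a < c" using C(1)[of a] ak hx h0 unfolding y_def x_def by simp
  define b where "b = c - 1"
  have ab: "a \<le> b" and bc: "Suc b = c" and bk: "b < k" using ac C(2) unfolding b_def by auto
  define w where "w = y - (k - c)"
  have w1: "pp la c \<le> w" using C(4) unfolding w_def .
  have w2: "w < pp la b" using C(5) ac unfolding w_def b_def by simp
  have ky: "k - c \<le> y" using C(3) .
  have anti: "i \<le> j \<Longrightarrow> pp la j \<le> pp la i" for i j using pp_antimono[OF la(1)] .
  define v where "v r = (if a \<le> r \<and> r < b then pp la (Suc r) - 1 else if r = b then w else pp la r)" for r
  have ppos: "0 < pp la (Suc r)" if "r < b" for r
    using w2 anti[of "Suc r" b] that by simp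
  have vle: "v r \<le> pp la r" for r
    unfolding v_def using anti[of r "Suc r"] w2 by auto
  have vlt: "v r < pp la r" if "a \<le> r" "r \<le> b" for r
  proof (cases "r = b")
    case True then show ?thesis using w2 unfolding v_def by simp
  next
    case False
    then show ?thesis using that ppos[of r] anti[of r "Suc r"] unfolding v_def by simp
  qed
  have vS: "v (Suc r) \<le> v r" for r
  proof -
    consider "Suc r < a" | "Suc r = a" | "a \<le> r" "Suc r < b" | "a \<le> r" "Suc r = b" | "r = b" | "b < r"
      using ab by linarith
    then show ?thesis
    proof cases
      case 1 then show ?thesis unfolding v_def using anti[of r "Suc r"] ab by simp
    next
      case 2 then show ?thesis using vle[of "Suc r"] anti[of r "Suc r"] ab unfolding v_def[of r] by simp
    next
      case 3 then show ?thesis unfolding v_def using anti[of "Suc r" "Suc (Suc r)"] by simp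
    next
      case 4 then show ?thesis unfolding v_def using w2 by simp
    next
      case 5 then show ?thesis unfolding v_def using w1 bc by simp
    next
      case 6 then show ?thesis unfolding v_def using anti[of r "Suc r"] by simp
    qed
  qed
  have vmono: "v j \<le> v i" if "i \<le> j" for i j
    using vS that by (metis antimono_iff_le_Suc antimonoD)
  have v0: "v r = 0" if "k \<le> r" for r
    using that bk la(2) unfolding v_def pp_def by simp
  obtain mu where mu: "is_partition mu" "length mu \<le> k" "\<And>r. pp mu r = v r"
    using exists_partition[of v k] vmono v0 by blast
  define S where "S = young_diagram la - young_diagram mu"
  have Sd: "S = {(r, j). v r \<le> j \<and> j < pp la r}"
    unfolding S_def young_pp mu(3) by auto
  have sub: "young_diagram mu \<subseteq> young_diagram la"
    unfolding young_pp mu(3) using vle by (auto intro: less_le_trans)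
  have bmu: "beta k mu = insert (bt k mu b) (beta k la - {x})"
    unfolding x_def
  proof (rule shift_beta[OF la(1) ab bk])
    fix r assume r: "a \<le> r" "r < b"
    then have "Suc r < k" using bk by simp
    then show "bt k mu r = bt k la (Suc r)"
      using r ppos[of r] unfolding bt_def mu(3) v_def by simp
  next
    fix r assume "r < k" "r < a \<or> b < r"
    then show "bt k mu r = bt k la r" unfolding bt_def mu(3) v_def using ab by auto
  qed
  have btb: "bt k mu b = y" unfolding bt_def mu(3) v_def w_def using ky bc by simp
  have xin: "x \<in> beta k la" unfolding x_def beta_def using ak by simp
  have ynot: "y \<notin> beta k la - {x}" using yn by simp
  have sm: "sum id (beta k mu) + x = sum id (beta k la) + y"
    by (rule sum_move[OF finite_beta xin ynot bmu[unfolded btb]])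
      (simp add: card_beta la(1) mu(1))
  have "card S + sum id (beta k mu) = sum id (beta k la)"
    unfolding S_def by (rule card_skew[OF la mu(1,2)]) (simp add: mu(3) vle)
  then have cS: "card S = h" using sm hx unfolding y_def x_def by simp
  have bw: "(b, w) \<in> S" unfolding Sd v_def using w2 by simp
  have rows: "a \<le> r \<and> r \<le> b" if "(r, j) \<in> S" for r j
    using that ab unfolding Sd v_def by (auto split: if_splits)
  have sq: "no_2x2_square S"
    unfolding no_2x2_square_def
  proof clarify
    fix r j assume c: "(r, j) \<in> S" "(Suc r, j) \<in> S" "(r, Suc j) \<in> S" "(Suc r, Suc j) \<in> S"
    have "a \<le> r" "r < b" using rows[OF c(1)] rows[OF c(2)] by auto
    then show False using c(1,4) unfolding Sd v_def by auto
  qed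
  define Rel where "Rel = (\<lambda>p q. p \<in> S \<and> q \<in> S \<and> cells_adjacent p q)"
  have Rsym: "Rel p q \<Longrightarrow> Rel q p" for p q
    unfolding Rel_def cells_adjacent_def by auto
  have row: "Rel\<^sup>*\<^sup>* (r, j) (r, v r)" if "(r, j) \<in> S" for r j
    using that
  proof (induction "j - v r" arbitrary: j)
    case 0
    then have "j = v r" unfolding Sd by simp
    then show ?case by simp
  next
    case (Suc n)
    then have j1: "(r, j - 1) \<in> S" "v r < j" unfolding Sd by auto
    then have "Rel (r, j) (r, j - 1)" using Suc(3) unfolding Rel_def cells_adjacent_def by simp
    moreover have "Rel\<^sup>*\<^sup>* (r, j - 1) (r, v r)" using Suc(1)[of "j - 1"] Suc(2) j1 by simp
    ultimately show ?case by (rule converse_rtranclp_into_rtranclp)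
  qed
  have col: "Rel\<^sup>*\<^sup>* (r, v r) (b, w)" if "a \<le> r" "r \<le> b" for r
    using that
  proof (induction "b - r" arbitrary: r)
    case 0
    then have "r = b" by simp
    then show ?case unfolding v_def by simp
  next
    case (Suc n)
    then have rb: "r < b" by simp
    have vr: "v r = pp la (Suc r) - 1" using rb Suc(3) unfolding v_def by simp
    have p1: "(Suc r, v r) \<in> S" unfolding Sd using vS[of r] vr ppos[OF rb] by simp
    have "Rel (r, v r) (Suc r, v r)"
      using p1 vlt[OF Suc(3)] rb unfolding Rel_def cells_adjacent_def Sd by simp
    moreover have "Rel\<^sup>*\<^sup>* (Suc r, v r) (Suc r, v (Suc r))" using row[OF p1] .
    moreover have "Rel\<^sup>*\<^sup>* (Suc r, v (Suc r)) (b, w)" using Suc(1)[of "Suc r"] Suc(2,3) rb by simp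
    ultimately show ?case by (meson converse_rtranclp_into_rtranclp rtranclp_trans)
  qed
  have toe: "Rel\<^sup>*\<^sup>* p (b, w)" if "p \<in> S" for p
  proof -
    obtain r j where p: "p = (r, j)" by (cases p) auto
    then show ?thesis using row[of r j] col[of r] rows[of r j] that by (meson rtranclp_trans)
  qed
  have conn: "cells_connected S"
    unfolding cells_connected_def
  proof clarify
    fix p q assume "p \<in> S" "q \<in> S"
    then have "Rel\<^sup>*\<^sup>* p (b, w)" "Rel\<^sup>*\<^sup>* (b, w) q"
      using toe[of p] toe[of q] sym_path[of Rel q "(b, w)", OF Rsym] by auto
    then show "(\<lambda>x y. x \<in> S \<and> y \<in> S \<and> cells_adjacent x y)\<^sup>*\<^sup>* p q"
      unfolding Rel_def by (rule rtranclp_trans)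
  qed
  have "removes_rim_hook h la mu"
    unfolding removes_rim_hook_def S_def[symmetric]
    using la(1) mu(1) sub cS bw sq conn by auto
  then show ?thesis by blast
qed

definition cnt :: "nat \<Rightarrow> nat set \<Rightarrow> nat \<Rightarrow> nat" where
  "cnt m X r = card {x \<in> X. x mod m = r}"

lemma cnt_move:
  assumes "finite X" "x \<in> X" "s \<le> x" "x - s \<notin> X"
  shows "cnt s (insert (x - s) (X - {x})) r = cnt s X r"
proof -
  have md: "(x - s) mod s = x mod s" using assms(3) by (simp add: le_mod_geq)
  have xs: "x - s \<noteq> x" using assms(2,4) by auto
  show ?thesis
  proof (cases "x mod s = r")
    case True
    have "{z \<in> insert (x - s) (X - {x}). z mod s = r} = insert (x - s) ({z \<in> X. z mod s = r} - {x})"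
      using md True by auto
    moreover have "x \<in> {z \<in> X. z mod s = r}" using True assms(2) by simp
    moreover have "0 < card {z \<in> X. z mod s = r}"
      using True assms(1,2) card_gt_0_iff by fastforce
    ultimately show ?thesis unfolding cnt_def using assms(1,4)
      by (simp add: card.insert_remove)
  next
    case False
    then have "{z \<in> insert (x - s) (X - {x}). z mod s = r} = {z \<in> X. z mod s = r}"
      using md by auto
    then show ?thesis unfolding cnt_def by simp
  qed
qed

lemma closed_char:
  assumes "finite X" "closed m X" "0 < m"
  shows "x \<in> X \<longleftrightarrow> x div m < cnt m X (x mod m)"
proof -
  define r where "r = x mod m"
  define A where "A = {j. r + m * j \<in> X}"
  have down: "r + m * i \<in> X" if "r + m * (i + d) \<in> X" for i d
    using that
  proof (induction d)
    case 0 then show ?case by simp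
  next
    case (Suc d)
    have "m \<le> r + m * (i + Suc d)" by simp
    then have "r + m * (i + Suc d) - m \<in> X" using Suc(2) assms(2) unfolding closed_def by blast
    moreover have "r + m * (i + Suc d) - m = r + m * (i + d)" by simp
    ultimately show ?case using Suc(1) by simp
  qed
  have inj: "inj (\<lambda>j. r + m * j)" using assms(3) by (auto intro: injI)
  have fA: "finite A" unfolding A_def using finite_vimageI[OF assms(1) inj] by (simp add: vimage_def)
  have Aeq: "A = {..<card A}"
  proof (rule downclosed_eq[OF fA])
    fix i j assume "j \<in> A" "i \<le> j"
    then show "i \<in> A" unfolding A_def using down[of i "j - i"] by simp
  qed
  have "(\<lambda>j. r + m * j) ` A = {z \<in> X. z mod m = r}"
  proof (intro equalityI subsetI)
    fix z assume "z \<in> (\<lambda>j. r + m * j) ` A"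
    then show "z \<in> {z \<in> X. z mod m = r}" unfolding A_def r_def using assms(3) by auto
  next
    fix z assume z: "z \<in> {z \<in> X. z mod m = r}"
    then have "z mod m = r" by simp
    then have "z = r + m * (z div m)" using div_mult_mod_eq[of z m] by (simp add: algebra_simps)
    moreover have "z div m \<in> A" using z \<open>z = r + m * (z div m)\<close> unfolding A_def by simp
    ultimately show "z \<in> (\<lambda>j. r + m * j) ` A" by (rule image_eqI)
  qed
  then have cA: "card A = cnt m X r" unfolding cnt_def
    by (metis card_image inj inj_on_subset subset_UNIV)
  have "x = r + m * (x div m)" unfolding r_def by simp
  then have "x \<in> X \<longleftrightarrow> x div m \<in> A" unfolding A_def by simp
  also have "\<dots> \<longleftrightarrow> x div m < card A" using Aeq by blast
  finally show ?thesis using cA r_def by simp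
qed

lemma closed_eq:
  assumes "finite X" "finite Y" "closed m X" "closed m Y" "0 < m"
    "\<And>r. r < m \<Longrightarrow> cnt m X r = cnt m Y r"
  shows "X = Y"
proof -
  have "x \<in> X \<longleftrightarrow> x \<in> Y" for x
    using closed_char[OF assms(1,3,5), of x] closed_char[OF assms(2,4,5), of x]
      assms(6)[of "x mod m"] assms(5) by simp
  then show ?thesis by blast
qed

context
  fixes s :: nat
  assumes s0: "0 < s"
begin

lemma reach_props:
  assumes "(removes_rim_hook s)\<^sup>*\<^sup>* la mu" "is_partition la" "length la \<le> k"
  shows "is_partition mu \<and> length mu \<le> k \<and> (\<forall>r. cnt s (beta k mu) r = cnt s (beta k la) r)"
  using assms(1)
proof (induction rule: rtranclp_induct)
  case base then show ?case using assms by simp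
next
  case (step y z)
  then have yk: "length y \<le> k" by simp
  note F = rim_fwd[OF step(2) yk]
  obtain i where i: "i < k" "s \<le> bt k y i" "bt k y i - s \<notin> beta k y"
    "beta k z = insert (bt k y i - s) (beta k y - {bt k y i})" using F(3) by blast
  have "cnt s (beta k z) r = cnt s (beta k y) r" for r
    unfolding i(4) by (rule cnt_move[OF finite_beta _ i(2,3)]) (use i(1) in \<open>simp add: beta_def\<close>)
  then show ?case using step F(1) unfolding removes_rim_hook_def by auto
qed

lemma terminal_closed:
  assumes "is_partition mu" "length mu \<le> k" "\<not> (\<exists>nu. removes_rim_hook s mu nu)"
  shows "closed s (beta k mu)"
  unfolding closed_def
proof (rule ccontr)
  assume "\<not> (\<forall>x\<in>beta k mu. s \<le> x \<longrightarrow> x - s \<in> beta k mu)"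
  then obtain a where "a < k" "s \<le> bt k mu a" "bt k mu a - s \<notin> beta k mu"
    unfolding beta_def by auto
  then show False using rim_bwd[OF assms(1,2) _ s0] assms(3) by blast
qed

lemma exists_terminal:
  assumes "is_partition la" "length la \<le> k"
  shows "\<exists>mu. (removes_rim_hook s)\<^sup>*\<^sup>* la mu \<and> \<not> (\<exists>nu. removes_rim_hook s mu nu)"
  using assms
proof (induction "sum id (beta k la)" arbitrary: la rule: less_induct)
  case less
  show ?case
  proof (cases "\<exists>nu. removes_rim_hook s la nu")
    case False then show ?thesis by blast
  next
    case True
    then obtain nu where nu: "removes_rim_hook s la nu" by blast
    note F = rim_fwd[OF nu less(3)]
    have pnu: "is_partition nu" using nu unfolding removes_rim_hook_def by simp
    obtain i where i: "i < k" "s \<le> bt k la i" "bt k la i - s \<notin> beta k la"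
      "beta k nu = insert (bt k la i - s) (beta k la - {bt k la i})" using F(3) by blast
    have "sum id (beta k nu) + bt k la i = sum id (beta k la) + (bt k la i - s)"
      by (rule sum_move[OF finite_beta _ _ i(4)]) (use i(1,3) pnu less(2) card_beta in \<open>auto simp: beta_def\<close>)
    then have "sum id (beta k nu) < sum id (beta k la)" using i(2) s0 by simp
    then obtain mu where "(removes_rim_hook s)\<^sup>*\<^sup>* nu mu" "\<not> (\<exists>nu. removes_rim_hook s mu nu)"
      using less(1)[of nu] pnu F(1) less(3) by auto
    then show ?thesis using nu by (meson converse_rtranclp_into_rtranclp)
  qed
qed

lemma core_props:
  assumes "is_partition la" "length la \<le> k"
  shows "(removes_rim_hook s)\<^sup>*\<^sup>* la (core s la) \<and> \<not> (\<exists>nu. removes_rim_hook s (core s la) nu)"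
proof -
  have "\<exists>!mu. (removes_rim_hook s)\<^sup>*\<^sup>* la mu \<and> \<not> (\<exists>nu. removes_rim_hook s mu nu)"
  proof (rule ex_ex1I)
    show "\<exists>mu. (removes_rim_hook s)\<^sup>*\<^sup>* la mu \<and> \<not> (\<exists>nu. removes_rim_hook s mu nu)"
      using exists_terminal[OF assms] .
  next
    fix m1 m2
    assume m1: "(removes_rim_hook s)\<^sup>*\<^sup>* la m1 \<and> \<not> (\<exists>nu. removes_rim_hook s m1 nu)"
      and m2: "(removes_rim_hook s)\<^sup>*\<^sup>* la m2 \<and> \<not> (\<exists>nu. removes_rim_hook s m2 nu)"
    note R1 = reach_props[OF conjunct1[OF m1] assms] and R2 = reach_props[OF conjunct1[OF m2] assms]
    have c1: "closed s (beta k m1)" using terminal_closed[of m1] R1 m1 by blast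
    have c2: "closed s (beta k m2)" using terminal_closed[of m2] R2 m2 by blast
    have "beta k m1 = beta k m2"
      by (rule closed_eq[OF finite_beta finite_beta c1 c2 s0]) (simp add: R1 R2)
    then show "m1 = m2" using beta_inj R1 R2 by blast
  qed
  then show ?thesis unfolding core_def by (rule theI')
qed

lemma core_eq_iff:
  assumes la: "is_partition la" "length la \<le> k" and sg: "is_core s sigma" "length sigma \<le> k"
  shows "core s la = sigma \<longleftrightarrow> (\<forall>r<s. cnt s (beta k la) r = cnt s (beta k sigma) r)"
proof -
  note CP = core_props[OF la]
  note R = reach_props[OF conjunct1[OF CP] la]
  have psg: "is_partition sigma" using sg(1) unfolding is_core_def by simp
  have csg: "closed s (beta k sigma)" using core_iff_closed[OF psg sg(2) s0] sg(1) by simp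
  have cc: "closed s (beta k (core s la))" using terminal_closed[of "core s la"] R CP by blast
  show ?thesis
  proof
    assume "core s la = sigma"
    then show "\<forall>r<s. cnt s (beta k la) r = cnt s (beta k sigma) r" using R by metis
  next
    assume "\<forall>r<s. cnt s (beta k la) r = cnt s (beta k sigma) r"
    then have "beta k (core s la) = beta k sigma"
      using closed_eq[OF finite_beta finite_beta cc csg s0] R by simp
    then show "core s la = sigma" using beta_inj R psg sg(2) by blast
  qed
qed

end

lemma card_sum_cnt:
  assumes "finite X" "0 < m"
  shows "card X = (\<Sum>r<m. cnt m X r)"
proof -
  have "X = (\<Union>r\<in>{..<m}. {x \<in> X. x mod m = r})" using assms(2) by auto
  then have "card X = card (\<Union>r\<in>{..<m}. {x \<in> X. x mod m = r})" by simp
  also have "\<dots> = (\<Sum>r<m. card {x \<in> X. x mod m = r})"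
    by (rule card_UN_disjoint) (use assms(1) in auto)
  finally show ?thesis unfolding cnt_def .
qed

lemma cnt_split:
  assumes "finite X" "0 < s" "0 < t" "rho < s"
  shows "cnt s X rho = (\<Sum>q<t. cnt (s * t) X (rho + s * q))"
proof -
  have "{x \<in> X. x mod s = rho} = (\<Union>q\<in>{..<t}. {x \<in> X. x mod (s * t) = rho + s * q})"
  proof (intro equalityI subsetI)
    fix x assume x: "x \<in> {x \<in> X. x mod s = rho}"
    define q where "q = x mod (s * t) div s"
    have "x mod (s * t) mod s = x mod s" by (simp add: mod_mod_cancel)
    then have "x mod (s * t) = rho + s * q"
      using x div_mult_mod_eq[of "x mod (s * t)" s] unfolding q_def by (simp add: algebra_simps)
    moreover have "q < t" unfolding q_def
      by (rule less_mult_imp_div_less) (use assms in \<open>simp add: mult.commute\<close>)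
    ultimately show "x \<in> (\<Union>q\<in>{..<t}. {x \<in> X. x mod (s * t) = rho + s * q})" using x by auto
  next
    fix x assume "x \<in> (\<Union>q\<in>{..<t}. {x \<in> X. x mod (s * t) = rho + s * q})"
    then obtain q where "x \<in> X" "x mod (s * t) = rho + s * q" by auto
    then have "x mod (s * t) mod s = rho" using assms(4) by simp
    then show "x \<in> {x \<in> X. x mod s = rho}" using \<open>x \<in> X\<close> by (simp add: mod_mod_cancel)
  qed
  then have "cnt s X rho = card (\<Union>q\<in>{..<t}. {x \<in> X. x mod (s * t) = rho + s * q})"
    unfolding cnt_def by simp
  also have "\<dots> = (\<Sum>q<t. card {x \<in> X. x mod (s * t) = rho + s * q})"
    by (rule card_UN_disjoint) (use assms(1,2) in auto)
  finally show ?thesis unfolding cnt_def .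
qed

definition Zs :: "(nat \<Rightarrow> nat) \<Rightarrow> nat \<Rightarrow> nat set" where
  "Zs f m = {x. x div m < f (x mod m)}"

lemma Zs_union:
  assumes "0 < m"
  shows "Zs f m = (\<Union>r\<in>{..<m}. (\<lambda>j. r + m * j) ` {..<f r})"
proof (intro equalityI subsetI)
  fix x assume "x \<in> Zs f m"
  then have "x = x mod m + m * (x div m)" "x div m < f (x mod m)" "x mod m < m"
    using assms div_mult_mod_eq[of x m] unfolding Zs_def by (auto simp: algebra_simps)
  then show "x \<in> (\<Union>r\<in>{..<m}. (\<lambda>j. r + m * j) ` {..<f r})" by blast
next
  fix x assume "x \<in> (\<Union>r\<in>{..<m}. (\<lambda>j. r + m * j) ` {..<f r})"
  then show "x \<in> Zs f m" unfolding Zs_def using assms by auto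
qed

lemma Zs_finite: "0 < m \<Longrightarrow> finite (Zs f m)"
  using Zs_union by simp

lemma Zs_closed:
  assumes "0 < m"
  shows "closed m (Zs f m)"
  unfolding closed_def Zs_def
proof clarify
  fix x assume x: "x div m < f (x mod m)" "m \<le> x"
  have "(x - m) mod m = x mod m" using x(2) by (simp add: le_mod_geq)
  moreover have "x div m = Suc ((x - m) div m)"
  proof -
    have "x = (x - m) + m" using x(2) by simp
    then have "x div m = (x - m) div m + 1" using assms by (metis div_add_self2 less_not_refl2)
    then show ?thesis by simp
  qed
  ultimately show "(x - m) div m < f ((x - m) mod m)" using x(1) by simp
qed

lemma Zs_cnt:
  assumes "0 < m" "r < m"
  shows "cnt m (Zs f m) r = f r"
proof -
  have "{x \<in> Zs f m. x mod m = r} = (\<lambda>j. r + m * j) ` {..<f r}"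
  proof (intro equalityI subsetI)
    fix x assume x: "x \<in> {x \<in> Zs f m. x mod m = r}"
    then have "x = r + m * (x div m)" using div_mult_mod_eq[of x m] by (simp add: algebra_simps)
    moreover have "x div m < f r" using x unfolding Zs_def by auto
    ultimately show "x \<in> (\<lambda>j. r + m * j) ` {..<f r}" by blast
  next
    fix x assume "x \<in> (\<lambda>j. r + m * j) ` {..<f r}"
    then show "x \<in> {x \<in> Zs f m. x mod m = r}" unfolding Zs_def using assms by auto
  qed
  moreover have "inj (\<lambda>j. r + m * j)" using assms(1) by (auto intro: injI)
  ultimately show ?thesis unfolding cnt_def by (simp add: card_image inj_on_subset)
qed

lemma div_lt_t:
  fixes r s t :: nat
  assumes "r < s * t"
  shows "r div s < t"
  using less_mult_imp_div_less[of r t s] assms by (simp add: mult.commute)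

lemma card_B:
  fixes s t k :: nat and d :: "nat \<Rightarrow> nat"
  assumes s0: "0 < s" and t0: "0 < t" and dk: "(\<Sum>\<rho><s. d \<rho>) = k"
  shows "card {X. finite X \<and> card X = k \<and> closed (s * t) X \<and> (\<forall>\<rho><s. cnt s X \<rho> = d \<rho>)}
       = (\<Prod>\<rho><s. (d \<rho> + t - 1) choose (d \<rho>))"
proof -
  define K where "K = s * t"
  have K0: "0 < K" using s0 t0 unfolding K_def by simp
  define B where "B = {X. finite X \<and> card X = k \<and> closed K X \<and> (\<forall>\<rho><s. cnt s X \<rho> = d \<rho>)}"
  define L where "L \<rho> = {l::nat list. length l = t \<and> sum_list l = d \<rho>}" for \<rho>
  define f1 where "f1 X = (\<lambda>\<rho>\<in>{..<s}. map (\<lambda>q. cnt K X (\<rho> + s * q)) [0..<t])" for X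
  define g1 where "g1 G = Zs (\<lambda>r. G (r mod s) ! (r div s)) K" for G :: "nat \<Rightarrow> nat list"
  have sumq: "(\<Sum>q<t. cnt K X (\<rho> + s * q)) = cnt s X \<rho>" if "finite X" "\<rho> < s" for X \<rho>
    using cnt_split[OF that(1) s0 t0 that(2)] unfolding K_def by simp
  have rK: "\<rho> + s * q < K" if "\<rho> < s" "q < t" for \<rho> q
  proof -
    have "\<rho> + s * q < s + s * q" using that by simp
    also have "\<dots> = s * Suc q" by simp
    also have "\<dots> \<le> s * t" using that by (intro mult_le_mono2) simp
    finally show ?thesis unfolding K_def .
  qed
  have g1cnt: "cnt K (g1 G) r = G (r mod s) ! (r div s)" if "r < K" for G r
    unfolding g1_def using Zs_cnt[OF K0 that] .
  have bij: "bij_betw f1 B (PiE {..<s} L)"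
  proof (rule bij_betw_byWitness[where f' = g1])
    show "\<forall>X\<in>B. g1 (f1 X) = X"
    proof
      fix X assume X: "X \<in> B"
      show "g1 (f1 X) = X"
      proof (rule closed_eq[OF _ _ _ _ K0])
        show "finite (g1 (f1 X))" "closed K (g1 (f1 X))" unfolding g1_def
          using Zs_finite[OF K0] Zs_closed[OF K0] by auto
        show "finite X" "closed K X" using X unfolding B_def by auto
      next
        fix r assume r: "r < K"
        have rs: "r mod s < s" "r div s < t" using s0 r div_lt_t[of r s t] unfolding K_def by auto
        have "cnt K (g1 (f1 X)) r = f1 X (r mod s) ! (r div s)" using g1cnt[OF r] .
        also have "\<dots> = cnt K X (r mod s + s * (r div s))" unfolding f1_def using rs by simp
        also have "\<dots> = cnt K X r" by simp
        finally show "cnt K (g1 (f1 X)) r = cnt K X r" .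
      qed
    qed
  next
    show "\<forall>G\<in>PiE {..<s} L. f1 (g1 G) = G"
    proof
      fix G assume G: "G \<in> PiE {..<s} L"
      show "f1 (g1 G) = G"
      proof
        fix \<rho>
        show "f1 (g1 G) \<rho> = G \<rho>"
        proof (cases "\<rho> < s")
          case False
          then show ?thesis unfolding f1_def using PiE_arb[OF G, of \<rho>] by simp
        next
          case True
          then have lG: "length (G \<rho>) = t" using PiE_mem[OF G, of \<rho>] unfolding L_def by simp
          show ?thesis
          proof (rule nth_equalityI)
            show "length (f1 (g1 G) \<rho>) = length (G \<rho>)" unfolding f1_def using True lG by simp
          next
            fix q assume "q < length (f1 (g1 G) \<rho>)"
            then have q: "q < t" unfolding f1_def using True by simp
            have "f1 (g1 G) \<rho> ! q = cnt K (g1 G) (\<rho> + s * q)" unfolding f1_def using True q by simp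
            also have "\<dots> = G \<rho> ! q" using g1cnt[OF rK[OF True q]] True by simp
            finally show "f1 (g1 G) \<rho> ! q = G \<rho> ! q" .
          qed
        qed
      qed
    qed
  next
    show "f1 ` B \<subseteq> PiE {..<s} L"
    proof
      fix Y assume "Y \<in> f1 ` B"
      then obtain X where X: "X \<in> B" "Y = f1 X" by auto
      have "map (\<lambda>q. cnt K X (\<rho> + s * q)) [0..<t] \<in> L \<rho>" if "\<rho> < s" for \<rho>
      proof -
        have "sum_list (map (\<lambda>q. cnt K X (\<rho> + s * q)) [0..<t]) = (\<Sum>q<t. cnt K X (\<rho> + s * q))"
          by (simp add: sum_list_sum_nth atLeast0LessThan)
        also have "\<dots> = d \<rho>" using sumq[of X \<rho>] X that unfolding B_def by simp
        finally show ?thesis unfolding L_def by simp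
      qed
      then show "Y \<in> PiE {..<s} L" unfolding X f1_def by (simp add: restrict_PiE_iff)
    qed
  next
    show "g1 ` PiE {..<s} L \<subseteq> B"
    proof
      fix Y assume "Y \<in> g1 ` PiE {..<s} L"
      then obtain G where G: "G \<in> PiE {..<s} L" "Y = g1 G" by auto
      have fY: "finite Y" "closed K Y" unfolding G(2) g1_def
        using Zs_finite[OF K0] Zs_closed[OF K0] by auto
      have cY: "cnt s Y \<rho> = d \<rho>" if "\<rho> < s" for \<rho>
      proof -
        have lG: "length (G \<rho>) = t" "sum_list (G \<rho>) = d \<rho>"
          using PiE_mem[OF G(1), of \<rho>] that unfolding L_def by auto
        have "cnt s Y \<rho> = (\<Sum>q<t. cnt K Y (\<rho> + s * q))" using sumq[OF fY(1) that] by simp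
        also have "\<dots> = (\<Sum>q<t. G \<rho> ! q)"
          by (rule sum.cong) (use g1cnt rK that G(2) in auto)
        also have "\<dots> = d \<rho>" using lG by (simp add: sum_list_sum_nth atLeast0LessThan)
        finally show ?thesis .
      qed
      have "card Y = (\<Sum>\<rho><s. cnt s Y \<rho>)" by (rule card_sum_cnt[OF fY(1) s0])
      also have "\<dots> = k" using cY dk by simp
      finally show "Y \<in> B" unfolding B_def using fY cY by simp
    qed
  qed
  have "card B = card (PiE {..<s} L)" using bij_betw_same_card[OF bij] .
  also have "\<dots> = (\<Prod>\<rho><s. card (L \<rho>))" by (simp add: card_PiE)
  also have "\<dots> = (\<Prod>\<rho><s. (d \<rho> + t - 1) choose (d \<rho>))"
    unfolding L_def by (simp add: card_length_sum_list)
  finally show ?thesis unfolding B_def K_def .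
qed

lemma card_A:
  assumes s0: "0 < s" and t0: "0 < t" and sg: "is_core s sigma" and sk: "length sigma \<le> k"
  shows "card {la. is_core (s * t) la \<and> core s la = sigma \<and> length la \<le> k} =
    (\<Prod>\<rho><s. (cnt s (beta k sigma) \<rho> + t - 1) choose (cnt s (beta k sigma) \<rho>))"
proof -
  define A where "A = {la. is_core (s * t) la \<and> core s la = sigma \<and> length la \<le> k}"
  define d where "d \<rho> = cnt s (beta k sigma) \<rho>" for \<rho>
  define B where "B = {X. finite X \<and> card X = k \<and> closed (s * t) X \<and> (\<forall>\<rho><s. cnt s X \<rho> = d \<rho>)}"
  have K0: "0 < s * t" using s0 t0 by simp
  have psg: "is_partition sigma" using sg unfolding is_core_def by simp
  have "bij_betw (beta k) A B"
    unfolding bij_betw_def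
  proof
    show "inj_on (beta k) A"
      unfolding inj_on_def A_def is_core_def using beta_inj by blast
  next
    show "beta k ` A = B"
    proof (intro equalityI subsetI)
      fix X assume "X \<in> beta k ` A"
      then obtain la where la: "la \<in> A" "X = beta k la" by auto
      have pla: "is_partition la" "length la \<le> k" using la(1) unfolding A_def is_core_def by auto
      have "closed (s * t) X" using core_iff_closed[OF pla K0] la unfolding A_def by simp
      moreover have "\<forall>\<rho><s. cnt s X \<rho> = d \<rho>"
        using core_eq_iff[OF s0 pla sg sk] la unfolding A_def d_def by simp
      ultimately show "X \<in> B" unfolding B_def la(2) using card_beta[OF pla(1)] finite_beta by simp
    next
      fix X assume X: "X \<in> B"
      obtain la where la: "is_partition la" "length la \<le> k" "beta k la = X"
        using beta_surj[of X k] X unfolding B_def by auto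
      have "is_core (s * t) la" using core_iff_closed[OF la(1,2) K0] la(3) X unfolding B_def by simp
      moreover have "core s la = sigma"
        using core_eq_iff[OF s0 la(1,2) sg sk] la(3) X unfolding B_def d_def by simp
      ultimately show "X \<in> beta k ` A" unfolding A_def using la by auto
    qed
  qed
  then have "card A = card B" by (rule bij_betw_same_card)
  also have "\<dots> = (\<Prod>\<rho><s. (d \<rho> + t - 1) choose (d \<rho>))"
    unfolding B_def
  proof (rule card_B[OF s0 t0])
    show "(\<Sum>\<rho><s. d \<rho>) = k"
      using card_sum_cnt[OF finite_beta s0, of k sigma] card_beta[OF psg, of k] unfolding d_def by simp
  qed
  finally show ?thesis unfolding A_def d_def .
qed

lemma beta_shift:
  assumes "length sigma \<le> k"
  shows "beta (k + m) sigma = (\<lambda>x. x + m) ` beta k sigma \<union> {..<m}"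
proof (intro equalityI subsetI)
  fix z assume "z \<in> beta (k + m) sigma"
  then obtain i where i: "i < k + m" "z = bt (k + m) sigma i" unfolding beta_def by auto
  show "z \<in> (\<lambda>x. x + m) ` beta k sigma \<union> {..<m}"
  proof (cases "i < k")
    case True
    then have "z = bt k sigma i + m" using i unfolding bt_def by simp
    then show ?thesis using True unfolding beta_def by auto
  next
    case False
    then have "pp sigma i = 0" using assms unfolding pp_def by simp
    then have "z = k + m - Suc i" using i unfolding bt_def by simp
    then have "z < m" using i False by linarith
    then show ?thesis by simp
  qed
next
  fix z assume z: "z \<in> (\<lambda>x. x + m) ` beta k sigma \<union> {..<m}"
  show "z \<in> beta (k + m) sigma"
  proof (cases "z < m")
    case True
    define i where "i = k + m - Suc z"
    have "k \<le> i" "i < k + m" using True unfolding i_def by auto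
    moreover then have "pp sigma i = 0" using assms unfolding pp_def by simp
    ultimately have "bt (k + m) sigma i = z" unfolding bt_def i_def using True by simp
    then show ?thesis unfolding beta_def using \<open>i < k + m\<close> by (metis image_eqI lessThan_iff)
  next
    case False
    then obtain i where "i < k" "z = bt k sigma i + m" using z unfolding beta_def by auto
    then have "z = bt (k + m) sigma i" unfolding bt_def by simp
    then show ?thesis unfolding beta_def using \<open>i < k\<close> by auto
  qed
qed

lemma cnt_shift:
  assumes s0: "0 < s" and sk: "length sigma \<le> k" and r: "r < s"
  shows "cnt s (beta (k + s) sigma) r = Suc (cnt s (beta k sigma) r)"
proof -
  have "{x \<in> beta (k + s) sigma. x mod s = r} =
      insert r ((\<lambda>x. x + s) ` {x \<in> beta k sigma. x mod s = r})"
    unfolding beta_shift[OF sk] using r by auto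
  moreover have "r \<notin> (\<lambda>x. x + s) ` {x \<in> beta k sigma. x mod s = r}" using r by auto
  moreover have "finite {x \<in> beta k sigma. x mod s = r}" using finite_beta by simp
  ultimately show ?thesis unfolding cnt_def by (simp add: card_image)
qed

lemma cnt_shift_n:
  assumes s0: "0 < s" and sk: "length sigma \<le> k" and r: "r < s"
  shows "cnt s (beta (k + n * s) sigma) r = cnt s (beta k sigma) r + n"
proof (induction n)
  case 0 then show ?case by simp
next
  case (Suc n)
  have eq: "k + Suc n * s = (k + n * s) + s" by simp
  have "cnt s (beta ((k + n * s) + s) sigma) r = Suc (cnt s (beta (k + n * s) sigma) r)"
    by (rule cnt_shift[OF s0 _ r]) (use sk in simp)
  then show ?case unfolding eq using Suc by simp
qed

lemma poly_pochhammer: "poly (pochhammer p m) x = pochhammer (poly p x) m"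
  by (induction m) (simp_all add: pochhammer_Suc poly_of_nat)

lemma pochhammer_monic:
  fixes e :: rat
  shows "degree (pochhammer [:e, 1:] m) = m \<and> lead_coeff (pochhammer [:e, 1:] m) = 1"
proof (induction m)
  case 0 then show ?case by simp
next
  case (Suc m)
  have q: "[:e, 1:] + of_nat m = [:e + of_nat m, 1:]" by (simp add: of_nat_poly)
  define P where "P = pochhammer [:e, 1:] m"
  have P0: "P \<noteq> 0" using Suc unfolding P_def by auto
  have eq: "pochhammer [:e, 1:] (Suc m) = P * [:e + of_nat m, 1:]"
    unfolding P_def pochhammer_Suc q ..
  have nz: "[:e + of_nat m, 1:] \<noteq> 0" by simp
  define Q where "Q = [:e + of_nat m, 1:]"
  have dP: "degree P = m" "lead_coeff P = 1" using Suc unfolding P_def by auto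
  have dQ: "degree Q = 1" "lead_coeff Q = 1" unfolding Q_def by auto
  have "degree (P * Q) = Suc m" using degree_mult_eq[OF P0 nz[folded Q_def]] dP dQ by simp
  moreover have "lead_coeff (P * Q) = 1" using lead_coeff_mult[of P Q] dP dQ by simp
  ultimately show ?case unfolding eq Q_def[symmetric] by simp
qed

lemma choose_pochhammer:
  assumes "0 < t"
  shows "(of_nat ((D + t - 1) choose D) :: rat) = pochhammer (of_nat D + 1) (t - 1) / fact (t - 1)"
proof -
  have "(D + t - 1) choose D = (D + (t - 1)) choose (t - 1)"
    using assms by (cases t) (simp_all add: binomial_symmetric[of D "D + _"])
  then have "(of_nat ((D + t - 1) choose D) :: rat) = of_nat (D + (t - 1)) gchoose (t - 1)"
    by (simp add: binomial_gbinomial)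
  also have "\<dots> = pochhammer (of_nat D + 1) (t - 1) / fact (t - 1)"
    by (simp add: gbinomial_pochhammer')
  finally show ?thesis .
qed

theorem theorem4:
  fixes s t :: nat and sigma :: "nat list"
  assumes "0 < s" and "0 < t"
    and "is_core s sigma"
  shows "\<exists>Q :: nat \<Rightarrow> rat.
           (\<forall>i<s. \<exists>P :: rat poly.
               (\<forall>n. Q (i + n * s) = poly P (of_nat n)) \<and>
               degree P = s * (t - 1) \<and>
               lead_coeff P = 1 / (fact (t - 1)) ^ s) \<and>
           (\<forall>k \<ge> length sigma.
               of_nat (card {la. is_core (s * t) la \<and> core s la = sigma \<and> length la \<le> k}) = Q k)"
proof -
  note s0 = assms(1) and t0 = assms(2) and sg = assms(3)
  define dd where "dd k \<rho> = cnt s (beta k sigma) \<rho>" for k \<rho>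
  define n0 where "n0 i = (LEAST n. length sigma \<le> i + n * s)" for i
  have n0: "length sigma \<le> i + n0 i * s" for i
    unfolding n0_def
  proof (rule LeastI[of _ "length sigma"])
    have "length sigma \<le> length sigma * s" using s0 by simp
    then show "length sigma \<le> i + length sigma * s" by linarith
  qed
  have n0le: "n0 i \<le> n" if "length sigma \<le> i + n * s" for i n
    unfolding n0_def by (rule Least_le) (rule that)
  define e where "e i \<rho> = (of_nat (dd (i + n0 i * s) \<rho>) :: rat) - of_nat (n0 i)" for i \<rho>
  define c :: rat where "c = 1 / (fact (t - 1)) ^ s"
  define P where "P i = smult c (\<Prod>\<rho><s. pochhammer [:e i \<rho> + 1, 1:] (t - 1))" for i
  define Q where "Q k = poly (P (k mod s)) (of_nat (k div s))" for k
  show ?thesis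
  proof (intro exI[of _ Q] conjI allI impI)
    fix i assume i: "i < s"
    show "\<exists>P. (\<forall>n. Q (i + n * s) = poly P (of_nat n)) \<and> degree P = s * (t - 1) \<and>
        lead_coeff P = 1 / (fact (t - 1)) ^ s"
    proof (intro exI[of _ "P i"] conjI allI)
      fix n show "Q (i + n * s) = poly (P i) (of_nat n)" unfolding Q_def using i by simp
    next
      have c0: "c \<noteq> 0" unfolding c_def by simp
      have nz: "\<forall>\<rho>\<in>{..<s}. pochhammer [:e i \<rho> + 1, 1:] (t - 1) \<noteq> 0"
        using pochhammer_monic by (metis one_neq_zero leading_coeff_0_iff)
      show "degree (P i) = s * (t - 1)"
        unfolding P_def using degree_prod_eq_sum_degree[OF nz] pochhammer_monic c0 by simp
      show "lead_coeff (P i) = 1 / (fact (t - 1)) ^ s"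
      proof -
        have l1: "lead_coeff (pochhammer [:e i \<rho> + 1, 1:] (t - 1)) = 1" for \<rho>
          using pochhammer_monic by blast
        show ?thesis unfolding P_def lead_coeff_smult lead_coeff_prod l1 by (simp add: c_def)
      qed
    qed
  next
    fix k assume k: "length sigma \<le> k"
    define i where "i = k mod s"
    define n where "n = k div s"
    have kin: "k = i + n * s" unfolding i_def n_def by simp
    have i: "i < s" unfolding i_def using s0 by simp
    have nn: "n0 i \<le> n" using n0le k kin by simp
    define k0 where "k0 = i + n0 i * s"
    have kk: "k = k0 + (n - n0 i) * s" unfolding k0_def using kin nn
      by (simp add: diff_mult_distrib)
    have ddk: "dd k \<rho> = dd k0 \<rho> + (n - n0 i)" if "\<rho> < s" for \<rho>
      unfolding kk dd_def by (rule cnt_shift_n[OF s0 _ that]) (use n0 k0_def in simp)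
    have "(of_nat (card {la. is_core (s * t) la \<and> core s la = sigma \<and> length la \<le> k}) :: rat)
        = (\<Prod>\<rho><s. of_nat ((dd k \<rho> + t - 1) choose (dd k \<rho>)))"
      unfolding card_A[OF s0 t0 sg k] dd_def by simp
    also have "\<dots> = (\<Prod>\<rho><s. pochhammer (of_nat (dd k \<rho>) + 1) (t - 1) / fact (t - 1))"
      using choose_pochhammer[OF t0] by simp
    also have "\<dots> = c * (\<Prod>\<rho><s. pochhammer (of_nat (dd k \<rho>) + 1) (t - 1))"
      by (simp add: prod_dividef c_def)
    also have "\<dots> = poly (P i) (of_nat n)"
    proof -
      have H: "e i \<rho> + 1 + of_nat n = of_nat (dd k \<rho>) + 1" if "\<rho> < s" for \<rho>
        using ddk[OF that] nn unfolding e_def k0_def by (simp add: of_nat_diff)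
      have "(\<Prod>\<rho><s. pochhammer (of_nat (dd k \<rho>) + 1) (t - 1)) =
          (\<Prod>\<rho><s. pochhammer (e i \<rho> + 1 + of_nat n) (t - 1))"
      proof (rule prod.cong[OF refl])
        fix \<rho> assume "\<rho> \<in> {..<s}"
        then have "e i \<rho> + 1 + of_nat n = of_nat (dd k \<rho>) + 1" using H by simp
        then show "pochhammer (of_nat (dd k \<rho>) + 1) (t - 1) = pochhammer (e i \<rho> + 1 + of_nat n) (t - 1)"
          by (metis (no_types))
      qed
      then show ?thesis unfolding P_def by (simp add: poly_prod poly_pochhammer)
    qed
    also have "\<dots> = Q k" unfolding Q_def i_def n_def ..
    finally show "of_nat (card {la. is_core (s * t) la \<and> core s la = sigma \<and> length la \<le> k}) = Q k" .
  qed
qed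

end
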